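(* Let $(\mathbf{s}_t,\mathbf{a}_t,\mathbf{s}_{t+k})\sim\mathcal{D}$ with real-valued action $\mathbf{a}_t$ of finite second moment, let $\overline{\mu}(s_t)=\mathbb{E}[\mathbf{a}_t\mid \mathbf{s}_t=s_t]$, $\overline{\xi}(s_t,s_{t+k})=\mathbb{E}[\mathbf{a}_t\mid \mathbf{s}_t=s_t,\mathbf{s}_{t+k}=s_{t+k}]$ and $$\Delta=\mathbb{E}_{\mathbf{s}_t}\Big[\mathrm{Var}_{\mathbf{s}_{t+k}\mid \mathbf{s}_t}\big(\mathbb{E}[\mathbf{a}_t\mid \mathbf{s}_t,\mathbf{s}_{t+k}]\big)\Big].$$ Let $\widehat{\mu}$ be an estimator of the BC policy obtained from a random dataset $\mathcal{D}_n$ and $\widehat{\xi}_{\widehat p}$ an estimator of the IDM policy obtained from a random dataset $\mathcal{D}_{\widehat p,m}$. Define $$\delta=\mathbb{E}_{\mathbf{s}_t}\big[\mathrm{Var}(\widehat{\mu}(\mathbf{s}_t))\big]-\mathbb{E}_{\mathbf{s}_t,\mathbf{s}_{t+k}}\big[\mathrm{Var}(\widehat{\xi}_{\widehat p}(\mathbf{s}_t,\mathbf{s}_{t+k}))\big],\qquad \beta=b_\mu^2(\widehat\mu)-b_\xi^2(\widehat\xi_{\widehat p}),$$ where the variances are over the randomness of the respective datasets and $$b_\mu^2(\widehat\mu)=\mathbb{E}_{\mathbf{s}_t}\Big[\big(\mathbb{E}_{\mathcal{D}_n}[\widehat\mu(\mathbf{s}_t)]-\overline{\mu}(\mathbf{s}_t)\big)^2\Big],\quad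 b_\xi^2(\widehat\xi_{\widehat p})=\mathbb{E}_{\mathbf{s}_t,\mathbf{s}_{t+k}}\Big[\big(\mathbb{E}_{\mathcal{D}_{\widehat p,m}}[\widehat\xi_{\widehat p}(\mathbf{s}_t,\mathbf{s}_{t+k})]-\overline{\xi}(\mathbf{s}_t,\mathbf{s}_{t+k})\big)^2\Big].$$ Then $$\widehat\Delta_{\widehat p}:=\mathrm{EPE}(\widehat\mu)-\mathrm{EPE}(\widehat\xi_{\widehat p})=\Delta+\delta+\beta.$$
   Context: Setting: an MDP with an unknown expert policy generating a data distribution $\mathcal{D}$ over tuples $(s_t,a_t,s_{t+k})$, where $s_{t+k}$ is the state $k\ge 1$ steps after $s_t$. $\widehat p(\cdot\mid s_t)$ is an approximate state predictor of the future state. The datasets are $\mathcal{D}_n=\{(s_t,a_t,s_{t+k})\stackrel{\text{i.i.d.}}{\sim}\mathcal{D}\}_{t=1}^n$ and $\mathcal{D}_{\widehat p,m}=\{(s_t,a_t,\widehat s_{t+k}) : (s_t,a_t)\stackrel{\text{i.i.d.}}{\sim}\mathcal{D},\ \widehat s_{t+k}\sim\widehat p(\cdot\mid s_t)\}_{t=1}^m$; $\mathbb{E}_{\mathcal{D}_n}$ and $\mathbb{E}_{\mathcal{D}_{\widehat p,m}}$ denote expectation over these random datasets, and the estimators are deterministic functions of their datasets, independent of the test sample. The expected prediction errors are $\mathrm{EPE}(\widehat\mu)=\mathbb{E}_{\mathbf{s}_t,\mathbf{a}_t,\mathcal{D}_n}[(\mathbf{a}_t-\widehat\mu(\mathbf{s}_t))^2]$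 and $\mathrm{EPE}(\widehat\xi_{\widehat p})=\mathbb{E}_{\mathbf{s}_t,\mathbf{a}_t,\mathbf{s}_{t+k},\mathcal{D}_{\widehat p,m}}[(\mathbf{a}_t-\widehat\xi_{\widehat p}(\mathbf{s}_t,\mathbf{s}_{t+k}))^2]$, where the test tuple $(\mathbf{s}_t,\mathbf{a}_t,\mathbf{s}_{t+k})\sim\mathcal{D}$ uses the ground-truth future state. *)

theory Defs
  imports "HOL-Probability.Probability"
begin

type_synonym 's tup = "'s \<times> real \<times> 's"

definition act :: "'s tup \<Rightarrow> real" where
  "act x = fst (snd x)"

definition cur :: "'s tup \<Rightarrow> 's" where
  "cur x = fst x"

definition fut :: "'s tup \<Rightarrow> 's" where
  "fut x = snd (snd x)"

definition sig_s :: "'s tup measure \<Rightarrow> 's measure \<Rightarrow> 's tup measure" where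
  "sig_s D SS = vimage_algebra (space D) cur SS"

definition sig_ss :: "'s tup measure \<Rightarrow> 's measure \<Rightarrow> 's tup measure" where
  "sig_ss D SS = vimage_algebra (space D) (\<lambda>x. (cur x, fut x)) (SS \<Otimes>\<^sub>M SS)"

definition mubar :: "'s tup measure \<Rightarrow> 's measure \<Rightarrow> 's tup \<Rightarrow> real" where
  "mubar D SS = real_cond_exp D (sig_s D SS) act"

definition xibar :: "'s tup measure \<Rightarrow> 's measure \<Rightarrow> 's tup \<Rightarrow> real" where
  "xibar D SS = real_cond_exp D (sig_ss D SS) act"

definition cond_var :: "'a measure \<Rightarrow> 'a measure \<Rightarrow> ('a \<Rightarrow> real) \<Rightarrow> 'a \<Rightarrow> real" where
  "cond_var M F X = real_cond_exp M F (\<lambda>x. (X x - real_cond_exp M F X x)\<^sup>2)"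

definition Delta :: "'s tup measure \<Rightarrow> 's measure \<Rightarrow> real" where
  "Delta D SS = (\<integral>x. cond_var D (sig_s D SS) (xibar D SS) x \<partial>D)"

definition var :: "'a measure \<Rightarrow> ('a \<Rightarrow> real) \<Rightarrow> real" where
  "var M X = (\<integral>w. (X w - (\<integral>v. X v \<partial>M))\<^sup>2 \<partial>M)"

text \<open>distribution of (s_t, a_t, hat s_{t+k}) with (s_t,a_t) ~ D and hat s_{t+k} ~ phat(.|s_t)\<close>
definition Dp :: "'s tup measure \<Rightarrow> ('s \<Rightarrow> 's measure) \<Rightarrow> 's tup measure" where
  "Dp D phat = D \<bind> (\<lambda>x. distr (phat (cur x)) D (\<lambda>s'. (cur x, act x, s')))"

definition data_n :: "'s tup measure \<Rightarrow> nat \<Rightarrow> (nat \<Rightarrow> 's tup) measure" where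
  "data_n D n = PiM {..<n} (\<lambda>_. D)"

definition data_pm :: "'s tup measure \<Rightarrow> ('s \<Rightarrow> 's measure) \<Rightarrow> nat \<Rightarrow> (nat \<Rightarrow> 's tup) measure" where
  "data_pm D phat m = PiM {..<m} (\<lambda>_. Dp D phat)"

text \<open>expected prediction errors (test tuple independent of the dataset)\<close>
definition EPE_mu :: "'s tup measure \<Rightarrow> (nat \<Rightarrow> 's tup) measure \<Rightarrow> ((nat \<Rightarrow> 's tup) \<Rightarrow> 's \<Rightarrow> real) \<Rightarrow> real" where
  "EPE_mu D P mu = (\<integral>z. (act (snd z) - mu (fst z) (cur (snd z)))\<^sup>2 \<partial>(P \<Otimes>\<^sub>M D))"

definition EPE_xi :: "'s tup measure \<Rightarrow> (nat \<Rightarrow> 's tup) measure \<Rightarrow> ((nat \<Rightarrow> 's tup) \<Rightarrow> 's \<Rightarrow> 's \<Rightarrow> real) \<Rightarrow> real" where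
  "EPE_xi D Q xi = (\<integral>z. (act (snd z) - xi (fst z) (cur (snd z)) (fut (snd z)))\<^sup>2 \<partial>(Q \<Otimes>\<^sub>M D))"

definition delta :: "'s tup measure \<Rightarrow> (nat \<Rightarrow> 's tup) measure \<Rightarrow> (nat \<Rightarrow> 's tup) measure
    \<Rightarrow> ((nat \<Rightarrow> 's tup) \<Rightarrow> 's \<Rightarrow> real) \<Rightarrow> ((nat \<Rightarrow> 's tup) \<Rightarrow> 's \<Rightarrow> 's \<Rightarrow> real) \<Rightarrow> real" where
  "delta D P Q mu xi =
     (\<integral>x. var P (\<lambda>d. mu d (cur x)) \<partial>D) - (\<integral>x. var Q (\<lambda>e. xi e (cur x) (fut x)) \<partial>D)"

definition bias2_mu :: "'s tup measure \<Rightarrow> 's measure \<Rightarrow> (nat \<Rightarrow> 's tup) measure \<Rightarrow> ((nat \<Rightarrow> 's tup) \<Rightarrow> 's \<Rightarrow> real) \<Rightarrow> real" where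
  "bias2_mu D SS P mu = (\<integral>x. ((\<integral>d. mu d (cur x) \<partial>P) - mubar D SS x)\<^sup>2 \<partial>D)"

definition bias2_xi :: "'s tup measure \<Rightarrow> 's measure \<Rightarrow> (nat \<Rightarrow> 's tup) measure \<Rightarrow> ((nat \<Rightarrow> 's tup) \<Rightarrow> 's \<Rightarrow> 's \<Rightarrow> real) \<Rightarrow> real" where
  "bias2_xi D SS Q xi = (\<integral>x. ((\<integral>e. xi e (cur x) (fut x) \<partial>Q) - xibar D SS x)\<^sup>2 \<partial>D)"

end

theory Submission imports Defs begin

lemma abs_prod_le: "\<bar>(a::real) * b\<bar> \<le> a\<^sup>2 + b\<^sup>2"
proof -
  have "0 \<le> (\<bar>a\<bar> - \<bar>b\<bar>)\<^sup>2" by simp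
  then have "2 * (\<bar>a\<bar> * \<bar>b\<bar>) \<le> \<bar>a\<bar>\<^sup>2 + \<bar>b\<bar>\<^sup>2" unfolding power2_diff by linarith
  moreover have "0 \<le> \<bar>a\<bar> * \<bar>b\<bar>" by simp
  ultimately show ?thesis unfolding abs_mult power2_abs by linarith
qed

lemma L2_mult:
  fixes f g :: "'a \<Rightarrow> real"
  assumes [measurable]: "f \<in> borel_measurable M" "g \<in> borel_measurable M"
    and "integrable M (\<lambda>x. (f x)\<^sup>2)" "integrable M (\<lambda>x. (g x)\<^sup>2)"
  shows "integrable M (\<lambda>x. f x * g x)"
proof (rule Bochner_Integration.integrable_bound[where f="\<lambda>x. (f x)\<^sup>2 + (g x)\<^sup>2"])
  show "integrable M (\<lambda>x. (f x)\<^sup>2 + (g x)\<^sup>2)" using assms by auto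
  show "(\<lambda>x. f x * g x) \<in> borel_measurable M" by measurable
  show "AE x in M. norm (f x * g x) \<le> norm ((f x)\<^sup>2 + (g x)\<^sup>2)"
    using abs_prod_le by (intro AE_I2) simp
qed

lemma L2_diff:
  fixes f g :: "'a \<Rightarrow> real"
  assumes [measurable]: "f \<in> borel_measurable M" "g \<in> borel_measurable M"
    and "integrable M (\<lambda>x. (f x)\<^sup>2)" "integrable M (\<lambda>x. (g x)\<^sup>2)"
  shows "integrable M (\<lambda>x. (f x - g x)\<^sup>2)"
proof -
  have "integrable M (\<lambda>x. (f x)\<^sup>2 - 2 * (f x * g x) + (g x)\<^sup>2)"
    using L2_mult[OF assms] assms by auto
  moreover have "(\<lambda>x. (f x - g x)\<^sup>2) = (\<lambda>x. (f x)\<^sup>2 - 2 * (f x * g x) + (g x)\<^sup>2)"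
    by (rule ext) (simp add: power2_diff)
  ultimately show ?thesis by simp
qed

lemma pointwise_bv:
  fixes h :: "'a \<Rightarrow> real"
  assumes P: "prob_space P" and [measurable]: "h \<in> borel_measurable P"
    and int: "integrable P (\<lambda>d. (c - h d)\<^sup>2)"
  shows "(\<integral>d. (c - h d)\<^sup>2 \<partial>P) = (c - (\<integral>d. h d \<partial>P))\<^sup>2 + var P h"
proof -
  interpret prob_space P by fact
  have i1: "integrable P (\<lambda>d. c - h d)"
    by (rule square_integrable_imp_integrable) (use int in auto)
  have ih: "integrable P h"
  proof -
    have "integrable P (\<lambda>d. c - (c - h d))" by (rule Bochner_Integration.integrable_diff[OF integrable_const i1])
    then show ?thesis by simp
  qed
  define E where "E = (\<integral>d. h d \<partial>P)"
  have eq: "(\<lambda>d. (h d - E)\<^sup>2) = (\<lambda>d. (c - E)\<^sup>2 - 2 * (c - E) * (c - h d) + (c - h d)\<^sup>2)"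
    by (rule ext) (simp add: power2_eq_square algebra_simps)
  have "var P h = (\<integral>d. (c - E)\<^sup>2 - 2 * (c - E) * (c - h d) + (c - h d)\<^sup>2 \<partial>P)"
    unfolding var_def E_def[symmetric] eq ..
  also have "\<dots> = (c - E)\<^sup>2 - 2 * (c - E) * (c - E) + (\<integral>d. (c - h d)\<^sup>2 \<partial>P)"
    using i1 ih int by (simp add: E_def prob_space)
  finally show ?thesis unfolding E_def[symmetric] by (simp add: power2_eq_square)
qed

lemma prod_bv:
  fixes f :: "'p \<Rightarrow> 'x \<Rightarrow> real" and Y :: "'x \<Rightarrow> real"
  assumes P: "prob_space P" and D: "prob_space D"
    and Ym[measurable]: "Y \<in> borel_measurable D"
    and fm: "(\<lambda>z. f (fst z) (snd z)) \<in> borel_measurable (P \<Otimes>\<^sub>M D)"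
    and int: "integrable (P \<Otimes>\<^sub>M D) (\<lambda>z. (Y (snd z) - f (fst z) (snd z))\<^sup>2)"
  shows "(\<integral>z. (Y (snd z) - f (fst z) (snd z))\<^sup>2 \<partial>(P \<Otimes>\<^sub>M D))
           = (\<integral>x. (Y x - (\<integral>d. f d x \<partial>P))\<^sup>2 \<partial>D) + (\<integral>x. var P (\<lambda>d. f d x) \<partial>D)"
    and "integrable D (\<lambda>x. (Y x - (\<integral>d. f d x \<partial>P))\<^sup>2)"
    and "integrable D (\<lambda>x. var P (\<lambda>d. f d x))"
proof -
  interpret P: prob_space P by fact
  interpret D: prob_space D by fact
  interpret PD: pair_sigma_finite P D by unfold_locales
  have sw: "(\<lambda>(x, d). f d x) \<in> borel_measurable (D \<Otimes>\<^sub>M P)"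
    using measurable_pair_swap[OF fm] by (simp add: case_prod_beta')
  have sw2[measurable]: "(\<lambda>z. f (snd z) (fst z)) \<in> borel_measurable (D \<Otimes>\<^sub>M P)"
    using sw by (simp add: case_prod_beta')
  define g where "g x = (\<integral>d. f d x \<partial>P)" for x
  have gm[measurable]: "g \<in> borel_measurable D"
    unfolding g_def by (rule P.borel_measurable_lebesgue_integral[OF sw])
  have fx: "(\<lambda>d. f d x) \<in> borel_measurable P" if "x \<in> space D" for x
    using measurable_compose[OF measurable_Pair2'[OF that] fm] by simp
  define inner where "inner x = (\<integral>d. (Y x - f d x)\<^sup>2 \<partial>P)" for x
  have i: "integrable (P \<Otimes>\<^sub>M D) (\<lambda>(d, x). (Y x - f d x)\<^sup>2)"
    using int by (simp add: case_prod_beta')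
  have eq0: "(\<integral>x. inner x \<partial>D) = (\<integral>z. (Y (snd z) - f (fst z) (snd z))\<^sup>2 \<partial>(P \<Otimes>\<^sub>M D))"
    unfolding inner_def using PD.integral_snd[OF i] by (simp add: case_prod_beta')
  have iinner: "integrable D inner"
    unfolding inner_def using PD.integrable_snd[OF i] by simp
  have ae: "AE x in D. integrable P (\<lambda>d. (Y x - f d x)\<^sup>2)"
    using PD.AE_integrable_snd[OF i] by simp
  have vm: "(\<lambda>x. var P (\<lambda>d. f d x)) \<in> borel_measurable D"
  proof -
    have "(\<lambda>(x, d). (f d x - g x)\<^sup>2) \<in> borel_measurable (D \<Otimes>\<^sub>M P)"
      by (simp add: case_prod_beta') measurable
    from P.borel_measurable_lebesgue_integral[OF this]
    show ?thesis unfolding var_def g_def[symmetric] by simp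
  qed
  have ae2: "AE x in D. inner x = (Y x - g x)\<^sup>2 + var P (\<lambda>d. f d x)"
    using ae AE_space
  proof (eventually_elim)
    case (elim x)
    then show ?case
      unfolding inner_def g_def
      using pointwise_bv[OF P fx[OF elim(2)] elim(1)] by simp
  qed
  have im: "inner \<in> borel_measurable D" using iinner by auto
  have i1: "integrable D (\<lambda>x. (Y x - g x)\<^sup>2)"
  proof (rule Bochner_Integration.integrable_bound[OF iinner])
    show "(\<lambda>x. (Y x - g x)\<^sup>2) \<in> borel_measurable D" by measurable
    show "AE x in D. norm ((Y x - g x)\<^sup>2) \<le> norm (inner x)"
      using ae2
    proof (eventually_elim)
      case (elim x)
      have "0 \<le> var P (\<lambda>d. f d x)" unfolding var_def by simp
      then show ?case using elim by simp
    qed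
  qed
  have i2: "integrable D (\<lambda>x. var P (\<lambda>d. f d x))"
  proof (rule Bochner_Integration.integrable_bound[OF iinner vm])
    show "AE x in D. norm (var P (\<lambda>d. f d x)) \<le> norm (inner x)"
      using ae2
    proof (eventually_elim)
      case (elim x)
      have "0 \<le> var P (\<lambda>d. f d x)" unfolding var_def by simp
      then show ?case using elim by simp
    qed
  qed
  have "(\<integral>x. inner x \<partial>D) = (\<integral>x. (Y x - g x)\<^sup>2 + var P (\<lambda>d. f d x) \<partial>D)"
    by (rule integral_cong_AE[OF im _ ae2]) (use vm in measurable)
  also have "\<dots> = (\<integral>x. (Y x - g x)\<^sup>2 \<partial>D) + (\<integral>x. var P (\<lambda>d. f d x) \<partial>D)"
    using i1 i2 by simp
  finally show "(\<integral>z. (Y (snd z) - f (fst z) (snd z))\<^sup>2 \<partial>(P \<Otimes>\<^sub>M D))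
           = (\<integral>x. (Y x - (\<integral>d. f d x \<partial>P))\<^sup>2 \<partial>D) + (\<integral>x. var P (\<lambda>d. f d x) \<partial>D)"
    using eq0 unfolding g_def by simp
  show "integrable D (\<lambda>x. (Y x - (\<integral>d. f d x \<partial>P))\<^sup>2)" using i1 unfolding g_def .
  show "integrable D (\<lambda>x. var P (\<lambda>d. f d x))" by (rule i2)
qed

lemma cond_L2:
  fixes Y :: "'a \<Rightarrow> real"
  assumes D: "prob_space D" and subalg: "subalgebra D F"
    and Ym[measurable]: "Y \<in> borel_measurable D" and Y2: "integrable D (\<lambda>x. (Y x)\<^sup>2)"
  shows "integrable D (\<lambda>x. (real_cond_exp D F Y x)\<^sup>2)"
proof -
  interpret D: prob_space D by fact
  interpret FS: finite_measure_subalgebra D F by unfold_locales (rule subalg)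
  have Yi: "integrable D Y" by (rule D.square_integrable_imp_integrable[OF Ym Y2])
  show ?thesis
    by (rule FS.integrable_convex_cond_exp[where I=UNIV and q="\<lambda>x. x\<^sup>2"])
       (use Yi Y2 convex_power2 in auto)
qed

lemma cond_bv:
  fixes Y g :: "'a \<Rightarrow> real"
  assumes D: "prob_space D" and subalg: "subalgebra D F"
    and Ym[measurable]: "Y \<in> borel_measurable D" and Y2: "integrable D (\<lambda>x. (Y x)\<^sup>2)"
    and gm: "g \<in> borel_measurable F" and g2: "integrable D (\<lambda>x. (g x)\<^sup>2)"
  shows "(\<integral>x. (Y x - g x)\<^sup>2 \<partial>D)
     = (\<integral>x. (Y x - real_cond_exp D F Y x)\<^sup>2 \<partial>D) + (\<integral>x. (real_cond_exp D F Y x - g x)\<^sup>2 \<partial>D)"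
proof -
  interpret D: prob_space D by fact
  interpret FS: finite_measure_subalgebra D F by unfold_locales (rule subalg)
  define h where "h = real_cond_exp D F Y"
  have hm[measurable]: "h \<in> borel_measurable D" "h \<in> borel_measurable F" unfolding h_def by simp_all
  have gD[measurable]: "g \<in> borel_measurable D" by (rule measurable_from_subalg[OF subalg gm])
  have h2: "integrable D (\<lambda>x. (h x)\<^sup>2)" unfolding h_def by (rule cond_L2[OF D subalg Ym Y2])
  have hg2: "integrable D (\<lambda>x. (h x - g x)\<^sup>2)" by (rule L2_diff[OF hm(1) gD h2 g2])
  have Yh2: "integrable D (\<lambda>x. (Y x - h x)\<^sup>2)" by (rule L2_diff[OF Ym hm(1) Y2 h2])
  have hgm: "(\<lambda>x. h x - g x) \<in> borel_measurable D" by measurable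
  have hgF: "(\<lambda>x. h x - g x) \<in> borel_measurable F" using hm(2) gm by measurable
  have iY: "integrable D (\<lambda>x. (h x - g x) * Y x)" by (rule L2_mult[OF hgm Ym hg2 Y2])
  have ih: "integrable D (\<lambda>x. (h x - g x) * h x)" by (rule L2_mult[OF hgm hm(1) hg2 h2])
  have key: "(\<integral>x. (h x - g x) * h x \<partial>D) = (\<integral>x. (h x - g x) * Y x \<partial>D)"
    unfolding h_def by (rule FS.real_cond_exp_intg(2)[OF iY[unfolded h_def] hgF[unfolded h_def] Ym])
  have pw: "(\<lambda>x. (Y x - g x)\<^sup>2) = (\<lambda>x. (Y x - h x)\<^sup>2 + (h x - g x)\<^sup>2 + 2 * ((h x - g x) * Y x - (h x - g x) * h x))"
    by (rule ext) (simp add: power2_eq_square algebra_simps)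
  have "(\<integral>x. (Y x - g x)\<^sup>2 \<partial>D) = (\<integral>x. (Y x - h x)\<^sup>2 \<partial>D) + (\<integral>x. (h x - g x)\<^sup>2 \<partial>D)
          + 2 * ((\<integral>x. (h x - g x) * Y x \<partial>D) - (\<integral>x. (h x - g x) * h x \<partial>D))"
    unfolding pw using Yh2 hg2 iY ih by simp
  then show ?thesis using key unfolding h_def by simp
qed

theorem corollary1:
  fixes D :: "'s tup measure" and SS :: "'s measure"
    and phat :: "'s \<Rightarrow> 's measure" and n m :: nat
    and mu :: "(nat \<Rightarrow> 's tup) \<Rightarrow> 's \<Rightarrow> real"
    and xi :: "(nat \<Rightarrow> 's tup) \<Rightarrow> 's \<Rightarrow> 's \<Rightarrow> real"
  assumes D_prob: "prob_space D"
    and D_sets: "sets D = sets (SS \<Otimes>\<^sub>M (borel :: real measure) \<Otimes>\<^sub>M SS)"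
    and a_L2: "integrable D (\<lambda>x. (act x)\<^sup>2)"
    and phat_kernel: "phat \<in> SS \<rightarrow>\<^sub>M prob_algebra SS"
    and mu_meas: "(\<lambda>z. mu (fst z) (snd z)) \<in> borel_measurable (data_n D n \<Otimes>\<^sub>M SS)"
    and xi_meas: "(\<lambda>z. xi (fst z) (fst (snd z)) (snd (snd z)))
                    \<in> borel_measurable (data_pm D phat m \<Otimes>\<^sub>M (SS \<Otimes>\<^sub>M SS))"
    and EPE_mu_fin: "integrable (data_n D n \<Otimes>\<^sub>M D)
                       (\<lambda>z. (act (snd z) - mu (fst z) (cur (snd z)))\<^sup>2)"
    and EPE_xi_fin: "integrable (data_pm D phat m \<Otimes>\<^sub>M D)
                       (\<lambda>z. (act (snd z) - xi (fst z) (cur (snd z)) (fut (snd z)))\<^sup>2)"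
  shows "EPE_mu D (data_n D n) mu - EPE_xi D (data_pm D phat m) xi
         = Delta D SS
           + delta D (data_n D n) (data_pm D phat m) mu xi
           + (bias2_mu D SS (data_n D n) mu - bias2_xi D SS (data_pm D phat m) xi)"
proof -
  let ?P = "data_n D n" and ?Q = "data_pm D phat m"
  interpret D: prob_space D by (rule D_prob)
  have Dsp: "space D = space SS \<times> UNIV \<times> space SS"
    using sets_eq_imp_space_eq[OF D_sets] by (simp add: space_pair_measure)
  have Dm: "\<And>N. measurable D N = measurable (SS \<Otimes>\<^sub>M (borel :: real measure) \<Otimes>\<^sub>M SS) N"
    by (rule measurable_cong_sets[OF D_sets refl])
  have cur_m[measurable]: "cur \<in> D \<rightarrow>\<^sub>M SS"
    unfolding Dm cur_def by measurable
  have fut_m[measurable]: "fut \<in> D \<rightarrow>\<^sub>M SS"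
    unfolding Dm fut_def by measurable
  have act_m[measurable]: "act \<in> borel_measurable D"
    unfolding Dm act_def by measurable
  have cf_m[measurable]: "(\<lambda>x. (cur x, fut x)) \<in> D \<rightarrow>\<^sub>M SS \<Otimes>\<^sub>M SS" by measurable
  have Pprob: "prob_space ?P" unfolding data_n_def by (rule prob_space_PiM) (rule D_prob)
  have Dpprob: "prob_space (Dp D phat)"
    unfolding Dp_def
  proof (rule D.prob_space_bind[where S=D])
    have ph: "phat (cur x) \<in> space (prob_algebra SS)" if "x \<in> space D" for x
      using measurable_space[OF phat_kernel] cur_m that by (auto simp: measurable_def)
    have km: "(\<lambda>s'. (cur x, act x, s')) \<in> phat (cur x) \<rightarrow>\<^sub>M D" if "x \<in> space D" for x
    proof -
      have sx: "sets (phat (cur x)) = sets SS" using ph[OF that] by (simp add: space_prob_algebra)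
      have cx: "cur x \<in> space SS" by (rule measurable_space[OF cur_m that])
      have "(\<lambda>s'. (cur x, act x, s')) \<in> SS \<rightarrow>\<^sub>M SS \<Otimes>\<^sub>M (borel :: real measure) \<Otimes>\<^sub>M SS"
        using cx by (intro measurable_Pair measurable_const) auto
      then show ?thesis unfolding measurable_cong_sets[OF sx D_sets] .
    qed
    show "AE x in D. prob_space (distr (phat (cur x)) D (\<lambda>s'. (cur x, act x, s')))"
    proof (rule AE_I2)
      fix x assume x: "x \<in> space D"
      interpret px: prob_space "phat (cur x)" using ph[OF x] by (simp add: space_prob_algebra)
      show "prob_space (distr (phat (cur x)) D (\<lambda>s'. (cur x, act x, s')))"
        by (rule px.prob_space_distr[OF km[OF x]])
    qed
    have phm: "(\<lambda>x. phat (cur x)) \<in> D \<rightarrow>\<^sub>M subprob_algebra SS"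
      using measurable_compose[OF cur_m measurable_prob_algebraD[OF phat_kernel]] .
    have fm: "(\<lambda>(x, s'). (cur x, act x, s')) \<in> D \<Otimes>\<^sub>M SS \<rightarrow>\<^sub>M D"
      unfolding measurable_cong_sets[OF refl D_sets] by measurable
    show "(\<lambda>x. distr (phat (cur x)) D (\<lambda>s'. (cur x, act x, s'))) \<in> D \<rightarrow>\<^sub>M subprob_algebra D"
      by (rule measurable_distr2[OF _ phm]) (use fm in simp)
  qed
  have Qprob: "prob_space ?Q" unfolding data_pm_def by (rule prob_space_PiM) (rule Dpprob)
  interpret Pp: prob_space ?P by (rule Pprob)
  interpret Qp: prob_space ?Q by (rule Qprob)
  have subalg_s: "subalgebra D (sig_s D SS)"
    using sets_image_in_sets[OF refl cur_m] by (auto simp: subalgebra_def sig_s_def)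
  have subalg_ss: "subalgebra D (sig_ss D SS)"
    using sets_image_in_sets[OF refl cf_m] by (auto simp: subalgebra_def sig_ss_def)
  have cf_ss: "(\<lambda>x. (cur x, fut x)) \<in> sig_ss D SS \<rightarrow>\<^sub>M SS \<Otimes>\<^sub>M SS"
    unfolding sig_ss_def by (rule measurable_vimage_algebra1) (use cf_m in \<open>auto simp: measurable_def\<close>)
  have cur_ss: "cur \<in> sig_ss D SS \<rightarrow>\<^sub>M SS"
    using measurable_compose[OF cf_ss measurable_fst] by simp
  have subalg_s_ss: "subalgebra (sig_ss D SS) (sig_s D SS)"
    unfolding subalgebra_def
  proof
    show "sets (sig_s D SS) \<subseteq> sets (sig_ss D SS)"
    proof -
      have "space (sig_ss D SS) = space D" by (simp add: sig_ss_def)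
      from sets_image_in_sets[OF this cur_ss] show ?thesis unfolding sig_s_def .
    qed
    show "space (sig_s D SS) = space (sig_ss D SS)" by (simp add: sig_s_def sig_ss_def)
  qed
  have a_int: "integrable D act" by (rule D.square_integrable_imp_integrable[OF act_m a_L2])
  have mubar_m: "mubar D SS \<in> borel_measurable (sig_s D SS)" unfolding mubar_def by simp
  have mubar_mD[measurable]: "mubar D SS \<in> borel_measurable D" unfolding mubar_def by simp
  have xibar_m: "xibar D SS \<in> borel_measurable (sig_ss D SS)" unfolding xibar_def by simp
  have xibar_mD[measurable]: "xibar D SS \<in> borel_measurable D" unfolding xibar_def by simp
  have mubar2: "integrable D (\<lambda>x. (mubar D SS x)\<^sup>2)"
    unfolding mubar_def by (rule cond_L2[OF D_prob subalg_s act_m a_L2])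
  have xibar2: "integrable D (\<lambda>x. (xibar D SS x)\<^sup>2)"
    unfolding xibar_def by (rule cond_L2[OF D_prob subalg_ss act_m a_L2])

  have fmu: "(\<lambda>z. mu (fst z) (cur (snd z))) \<in> borel_measurable (?P \<Otimes>\<^sub>M D)"
  proof -
    have "(\<lambda>z. (fst z, cur (snd z))) \<in> ?P \<Otimes>\<^sub>M D \<rightarrow>\<^sub>M ?P \<Otimes>\<^sub>M SS" by measurable
    from measurable_compose[OF this mu_meas] show ?thesis by simp
  qed
  note bvmu = prod_bv[where f="\<lambda>d x. mu d (cur x)", OF Pprob D_prob act_m _ EPE_mu_fin, simplified, OF fmu]
  define gmu where "gmu x = (\<integral>d. mu d (cur x) \<partial>?P)" for x
  have gmu_s: "gmu \<in> borel_measurable (sig_s D SS)"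
  proof -
    have "(\<lambda>(s, d). mu d s) \<in> borel_measurable (SS \<Otimes>\<^sub>M ?P)"
      using measurable_pair_swap[OF mu_meas] by (simp add: case_prod_beta')
    from Pp.borel_measurable_lebesgue_integral[OF this]
    have G: "(\<lambda>s. \<integral>d. mu d s \<partial>?P) \<in> borel_measurable SS" .
    have "cur \<in> sig_s D SS \<rightarrow>\<^sub>M SS"
      unfolding sig_s_def by (rule measurable_vimage_algebra1) (use cur_m in \<open>auto simp: measurable_def\<close>)
    from measurable_compose[OF this G] show ?thesis unfolding gmu_def .
  qed
  have gmu_D[measurable]: "gmu \<in> borel_measurable D" by (rule measurable_from_subalg[OF subalg_s gmu_s])
  have gmu2: "integrable D (\<lambda>x. (gmu x)\<^sup>2)"
  proof -
    have im: "(\<lambda>x. act x - gmu x) \<in> borel_measurable D" by measurable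
    have i2: "integrable D (\<lambda>x. (act x - gmu x)\<^sup>2)" using bvmu(2) by (simp add: gmu_def)
    have "integrable D (\<lambda>x. (act x - (act x - gmu x))\<^sup>2)"
      by (rule L2_diff[OF act_m im a_L2 i2])
    then show ?thesis by simp
  qed
  have cmu: "(\<integral>x. (act x - gmu x)\<^sup>2 \<partial>D) = (\<integral>x. (act x - mubar D SS x)\<^sup>2 \<partial>D) + bias2_mu D SS ?P mu"
    using cond_bv[OF D_prob subalg_s act_m a_L2 gmu_s gmu2]
    unfolding bias2_mu_def gmu_def[symmetric] mubar_def[symmetric]
    by (simp add: power2_commute)
  have EPEmu: "EPE_mu D ?P mu = (\<integral>x. (act x - mubar D SS x)\<^sup>2 \<partial>D) + bias2_mu D SS ?P mu
       + (\<integral>x. var ?P (\<lambda>d. mu d (cur x)) \<partial>D)"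
    unfolding EPE_mu_def bvmu(1) gmu_def[symmetric] cmu ..

  have fxi: "(\<lambda>z. xi (fst z) (cur (snd z)) (fut (snd z))) \<in> borel_measurable (?Q \<Otimes>\<^sub>M D)"
  proof -
    have "(\<lambda>z. (fst z, cur (snd z), fut (snd z))) \<in> ?Q \<Otimes>\<^sub>M D \<rightarrow>\<^sub>M ?Q \<Otimes>\<^sub>M (SS \<Otimes>\<^sub>M SS)" by measurable
    from measurable_compose[OF this xi_meas] show ?thesis by simp
  qed
  note bvxi = prod_bv[where f="\<lambda>e x. xi e (cur x) (fut x)", OF Qprob D_prob act_m _ EPE_xi_fin, simplified, OF fxi]
  define gxi where "gxi x = (\<integral>e. xi e (cur x) (fut x) \<partial>?Q)" for x
  have gxi_s: "gxi \<in> borel_measurable (sig_ss D SS)"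
  proof -
    have "(\<lambda>(p, e). xi e (fst p) (snd p)) \<in> borel_measurable ((SS \<Otimes>\<^sub>M SS) \<Otimes>\<^sub>M ?Q)"
      using measurable_pair_swap[OF xi_meas] by (simp add: case_prod_beta')
    from Qp.borel_measurable_lebesgue_integral[OF this]
    have G: "(\<lambda>p. \<integral>e. xi e (fst p) (snd p) \<partial>?Q) \<in> borel_measurable (SS \<Otimes>\<^sub>M SS)" .
    from measurable_compose[OF cf_ss G] show ?thesis unfolding gxi_def by simp
  qed
  have gxi_D[measurable]: "gxi \<in> borel_measurable D" by (rule measurable_from_subalg[OF subalg_ss gxi_s])
  have gxi2: "integrable D (\<lambda>x. (gxi x)\<^sup>2)"
  proof -
    have im: "(\<lambda>x. act x - gxi x) \<in> borel_measurable D" by measurable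
    have i2: "integrable D (\<lambda>x. (act x - gxi x)\<^sup>2)" using bvxi(2) by (simp add: gxi_def)
    have "integrable D (\<lambda>x. (act x - (act x - gxi x))\<^sup>2)"
      by (rule L2_diff[OF act_m im a_L2 i2])
    then show ?thesis by simp
  qed
  have cxi: "(\<integral>x. (act x - gxi x)\<^sup>2 \<partial>D) = (\<integral>x. (act x - xibar D SS x)\<^sup>2 \<partial>D) + bias2_xi D SS ?Q xi"
    using cond_bv[OF D_prob subalg_ss act_m a_L2 gxi_s gxi2]
    unfolding bias2_xi_def gxi_def[symmetric] xibar_def[symmetric]
    by (simp add: power2_commute)
  have EPExi: "EPE_xi D ?Q xi = (\<integral>x. (act x - xibar D SS x)\<^sup>2 \<partial>D) + bias2_xi D SS ?Q xi
       + (\<integral>x. var ?Q (\<lambda>e. xi e (cur x) (fut x)) \<partial>D)"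
    unfolding EPE_xi_def bvxi(1) gxi_def[symmetric] cxi ..

  have mubar_ss: "mubar D SS \<in> borel_measurable (sig_ss D SS)"
    by (rule measurable_from_subalg[OF subalg_s_ss mubar_m])
  have cdel: "(\<integral>x. (act x - mubar D SS x)\<^sup>2 \<partial>D) = (\<integral>x. (act x - xibar D SS x)\<^sup>2 \<partial>D)
      + (\<integral>x. (xibar D SS x - mubar D SS x)\<^sup>2 \<partial>D)"
    using cond_bv[OF D_prob subalg_ss act_m a_L2 mubar_ss mubar2]
    unfolding xibar_def[symmetric] .
  interpret Fs: finite_measure_subalgebra D "sig_s D SS" by unfold_locales (rule subalg_s)
  define ex where "ex = real_cond_exp D (sig_s D SS) (xibar D SS)"
  have ex_m[measurable]: "ex \<in> borel_measurable D" unfolding ex_def by simp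
  have ex2: "integrable D (\<lambda>x. (ex x)\<^sup>2)"
    unfolding ex_def by (rule cond_L2[OF D_prob subalg_s xibar_mD xibar2])
  have ae: "AE x in D. ex x = mubar D SS x"
    unfolding ex_def xibar_def mubar_def
    by (rule Fs.real_cond_exp_nested_subalg[OF subalg_ss subalg_s_ss a_int])
  have "Delta D SS = (\<integral>x. (xibar D SS x - ex x)\<^sup>2 \<partial>D)"
    unfolding Delta_def cond_var_def ex_def[symmetric]
    by (rule Fs.real_cond_exp_int(2)) (rule L2_diff[OF xibar_mD ex_m xibar2 ex2])
  also have "\<dots> = (\<integral>x. (xibar D SS x - mubar D SS x)\<^sup>2 \<partial>D)"
    by (rule integral_cong_AE) (use ae in auto)
  finally have Del: "Delta D SS = (\<integral>x. (xibar D SS x - mubar D SS x)\<^sup>2 \<partial>D)" .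
  show ?thesis
    unfolding EPEmu EPExi cdel Del delta_def by simp
qed

end
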